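(* Assume $C^\top C\succ0$ and that $r_1$ is proper (i.e. some $\widetilde W$ has $r_1(\widetilde W)<\infty$). Let $\gamma>0$ and let $\sigma_i\downarrow0$ be a decreasing sequence of positive numbers. With $H_\sigma$ and $H$ as in the context: 1. $\inf H_{\sigma_i}\to\inf H$. 2. There is a set $N\subseteq\mathbb{N}$ with $\mathbb{N}\setminus N$ finite such that for $v\in N$ the sets $\operatorname{argmin}H_{\sigma_v}$ are nonempty and form a bounded sequence, and $\limsup_{v}(\operatorname{argmin}H_{\sigma_v})\subseteq\operatorname{argmin}H$. 3. For any sequence $\epsilon_i\downarrow0$ and any choice $\widetilde W_i\in\epsilon_i\text{-}\operatorname{argmin}H_{\sigma_i}:=\{\widetilde W: H_{\sigma_i}(\widetilde W)\le\inf H_{\sigma_i}+\epsilon_i\}$, the sequence $(\widetilde W_i)$ is bounded and all its cluster points belong to $\operatorname{argmin}H$.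
   Context: Let $n,m,M\ge1$, $p=m+n$. For $i=1,\dots,M$ let $A_i\in\mathbb{R}^{n\times n}$, $B_{2,i}\in\mathbb{R}^{n\times m}$, $F_i=\begin{bmatrix}A_i&B_{2,i}\\0&0\end{bmatrix}$. Let $B_1\in\mathbb{R}^{n\times l}$, $C\in\mathbb{R}^{q\times n}$, $D\in\mathbb{R}^{q\times m}$ with $C^\top D=0$, $D^\top D\succ0$, $B_1B_1^\top\succ0$; $Q=\begin{bmatrix}B_1B_1^\top&0\\0&0\end{bmatrix}$, $R=\begin{bmatrix}C^\top C&0\\0&D^\top D\end{bmatrix}$, $V_1=[0,\ I_m]\in\mathbb{R}^{m\times p}$, $V_2=[I_n,\ 0]\in\mathbb{R}^{n\times p}$, $\Psi_i(W)=-V_2(F_iW+WF_i^\top+Q)V_2^\top$. $\mathrm{vec}$ is column-stacking, so $(V_2\otimes V_1)\mathrm{vec}(W)=\mathrm{vec}(V_1WV_2^\top)\in\mathbb{R}^{mn}$. $\Gamma^k_+=\{\mathrm{vec}(X):X\in\mathbb{S}^k_+\}$, $\delta_S$ the indicator of $S$, $\Omega=\{\mathrm{vec}(W):W_{ij}=0\ \text{for }1\le i<j\le n\}$. For $\widetilde W=\mathrm{vec}(W)\in\mathbb{R}^{p^2}$: $r_1(\widetilde W)=\langle\mathrm{vec}(R),\widetilde W\rangle+\delta_{\Gamma^p_+}(\widetilde W)+\sum_{i=1}^M\delta_{\Gamma^n_+}(\mathrm{vec}(\Psi_i(W)))+\delta_\Omega(\widetilde W)$. For $\sigma>0$ and $t\in\mathbb{R}$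 let $f_\sigma(t)=1-e^{-t/\sigma}$, and for $x\in\mathbb{R}^{mn}$, $f_\sigma(|x|)=\sum_kf_\sigma(|x_k|)$. Define $H_\sigma(\widetilde W)=r_1(\widetilde W)+\gamma f_\sigma(|(V_2\otimes V_1)\widetilde W|)$ and $H(\widetilde W)=r_1(\widetilde W)+\gamma\|(V_2\otimes V_1)\widetilde W\|_0$, where $\|\cdot\|_0$ counts nonzero entries. For a sequence of sets $S_v$, $\limsup_vS_v$ is the outer limit: the set of cluster points of sequences $(s_v)$ with $s_v\in S_v$ along a subsequence. *)

theory Defs
  imports "HOL-Analysis.Analysis"
begin

text \<open>The dimensions n, m, l, q are encoded by finite index types
  'n, 'm, 'l, 'q; p = n + m is encoded by the sum type 'n + 'm, where the first
  n indices are Inl _ and the last m indices are Inr _.  The index type 'n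
  carries a linear order, identifying it with {1..n} (needed for Omega).
  A vector in R^(p^2) is an element of real^(('n+'m) \<times> ('n+'m)); column stacking
  vec identifies the coordinate (i,j) with the matrix entry W_ij.\<close>

definition vecM :: "real^'c^'r \<Rightarrow> real^('r \<times> 'c)" where
  "vecM X = (\<chi> k. X $ fst k $ snd k)"

definition unvecM :: "real^('r \<times> 'c) \<Rightarrow> real^'c^'r" where
  "unvecM w = (\<chi> i j. w $ (i, j))"

definition psd :: "real^'k^'k \<Rightarrow> bool" where
  "psd X \<longleftrightarrow> transpose X = X \<and> (\<forall>x. 0 \<le> x \<bullet> (X *v x))"

definition pd :: "real^'k^'k \<Rightarrow> bool" where
  "pd X \<longleftrightarrow> transpose X = X \<and> (\<forall>x. x \<noteq> 0 \<longrightarrow> 0 < x \<bullet> (X *v x))"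

definition Gamma_plus :: "(real^(('k::finite) \<times> 'k)) set" where
  "Gamma_plus = vecM ` {X. psd X}"

definition indic :: "'a set \<Rightarrow> 'a \<Rightarrow> ereal" where
  "indic S x = (if x \<in> S then 0 else \<infinity>)"

definition Fmat :: "real^'n^'n \<Rightarrow> real^'m^'n \<Rightarrow> real^('n+'m)^('n+'m)" where
  "Fmat A B2 = (\<chi> i j. case i of
      Inl a \<Rightarrow> (case j of Inl b \<Rightarrow> A $ a $ b | Inr b \<Rightarrow> B2 $ a $ b)
    | Inr _ \<Rightarrow> 0)"

definition Qmat :: "real^'l^'n \<Rightarrow> real^('n+('m::finite))^('n+'m)" where
  "Qmat B1 = (\<chi> i j. case (i, j) of
      (Inl a, Inl b) \<Rightarrow> (B1 ** transpose B1) $ a $ b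
    | _ \<Rightarrow> 0)"

definition Rmat :: "real^'n^'q \<Rightarrow> real^'m^'q \<Rightarrow> real^('n+'m)^('n+'m)" where
  "Rmat C D = (\<chi> i j. case (i, j) of
      (Inl a, Inl b) \<Rightarrow> (transpose C ** C) $ a $ b
    | (Inr a, Inr b) \<Rightarrow> (transpose D ** D) $ a $ b
    | _ \<Rightarrow> 0)"

text \<open>V1 = [0, I_m], V2 = [I_n, 0]\<close>
definition V1 :: "real^(('n::finite)+('m::finite))^'m" where
  "V1 = (\<chi> a j. if j = Inr a then 1 else 0)"

definition V2 :: "real^(('n::finite)+('m::finite))^'n" where
  "V2 = (\<chi> a j. if j = Inl a then 1 else 0)"

definition Psi :: "real^'n^'n \<Rightarrow> real^'m^'n \<Rightarrow> real^'l^'n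
    \<Rightarrow> real^('n+'m)^('n+'m) \<Rightarrow> real^'n^'n" where
  "Psi A B2 B1 W = - (V2 ** (Fmat A B2 ** W + W ** transpose (Fmat A B2) + Qmat B1)
                        ** transpose V2)"

definition Omega :: "(real^((('n::{finite,linorder})+('m::finite)) \<times> ('n+'m))) set" where
  "Omega = {vecM W | W. \<forall>i j. i < j \<longrightarrow> W $ Inl i $ Inl j = 0}"

text \<open>(V2 \<otimes> V1) vec W = vec (V1 W V2^T), an element of R^(mn)\<close>
definition KV :: "real^((('n::finite)+('m::finite)) \<times> ('n+'m)) \<Rightarrow> real^('m \<times> 'n)" where
  "KV w = vecM ((V1 :: real^('n+'m)^'m) ** unvecM w ** transpose (V2 :: real^('n+'m)^'n))"

definition r1 :: "nat \<Rightarrow> (nat \<Rightarrow> real^('n::{finite,linorder})^('n::{finite,linorder})) \<Rightarrow> (nat \<Rightarrow> real^'m^('n::{finite,linorder})) \<Rightarrow> real^'l^('n::{finite,linorder})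
    \<Rightarrow> real^('n::{finite,linorder})^'q \<Rightarrow> real^'m^'q
    \<Rightarrow> real^((('n::{finite,linorder})+'m) \<times> (('n::{finite,linorder})+'m)) \<Rightarrow> ereal" where
  "r1 M A B2 B1 C D w =
     ereal (vecM (Rmat C D) \<bullet> w) + indic Gamma_plus w
     + (\<Sum>i\<in>{1..M}. indic Gamma_plus (vecM (Psi (A i) (B2 i) B1 (unvecM w))))
     + indic Omega w"

definition fsig :: "real \<Rightarrow> real \<Rightarrow> real" where
  "fsig \<sigma> t = 1 - exp (- t / \<sigma>)"

definition fsig_abs :: "real \<Rightarrow> real^'k \<Rightarrow> real" where
  "fsig_abs \<sigma> x = (\<Sum>k\<in>UNIV. fsig \<sigma> \<bar>x $ k\<bar>)"

definition l0norm :: "real^'k \<Rightarrow> nat" where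
  "l0norm x = card {k. x $ k \<noteq> 0}"

definition Hsig where
  "Hsig M A B2 B1 C D \<gamma> \<sigma> w = r1 M A B2 B1 C D w + ereal (\<gamma> * fsig_abs \<sigma> (KV w))"

definition Hzero where
  "Hzero M A B2 B1 C D \<gamma> w = r1 M A B2 B1 C D w + ereal (\<gamma> * real (l0norm (KV w)))"

definition argminE :: "('a \<Rightarrow> ereal) \<Rightarrow> 'a set" where
  "argminE f = {x. f x = (INF y. f y)}"

definition eps_argminE :: "real \<Rightarrow> ('a \<Rightarrow> ereal) \<Rightarrow> 'a set" where
  "eps_argminE \<epsilon> f = {x. f x \<le> (INF y. f y) + ereal \<epsilon>}"

definition outer_limit :: "nat set \<Rightarrow> (nat \<Rightarrow> ('a::topological_space) set) \<Rightarrow> 'a set" where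
  "outer_limit N S = {x. \<exists>r s. strict_mono r \<and> (\<forall>k. r k \<in> N) \<and>
      (\<forall>k. s k \<in> S (r k)) \<and> (s \<longlonglongrightarrow> x)}"

end

theory Submission imports Defs begin



lemma unvec_vec[simp]: "unvecM (vecM X) = X"
  by (simp add: unvecM_def vecM_def vec_eq_iff)
lemma vec_unvec[simp]: "vecM (unvecM w) = w"
  by (simp add: unvecM_def vecM_def vec_eq_iff)
lemma vecM_nth: "vecM X $ (i, j) = X $ i $ j" by (simp add: vecM_def)
lemma unvecM_nth[simp]: "unvecM w $ i $ j = w $ (i, j)" by (simp add: unvecM_def)

lemma Gamma_plus_eq: "Gamma_plus = {w. psd (unvecM w)}"
  unfolding Gamma_plus_def by (auto intro: image_eqI[where x="unvecM _"])

lemma vecM_in_Gamma: "vecM X \<in> Gamma_plus \<longleftrightarrow> psd X"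
  by (simp add: Gamma_plus_eq)

lemma Omega_eq: "Omega = {w. \<forall>i j. i < j \<longrightarrow> w $ (Inl i, Inl j) = 0}"
  unfolding Omega_def by (auto simp: vecM_nth intro: exI[where x="unvecM _"])

lemma indic_cases: "indic S x = (if x \<in> S then 0 else \<infinity>)" by (simp add: indic_def)

lemma sum_indic: "finite I \<Longrightarrow> (\<Sum>i\<in>I. indic S (h i)) = (if \<forall>i\<in>I. h i \<in> S then 0 else \<infinity>)"
  by (induction I rule: finite_induct) (auto simp: indic_def)

definition DomS :: "nat \<Rightarrow> (nat \<Rightarrow> real^('n::{finite,linorder})^('n::{finite,linorder})) \<Rightarrow> (nat \<Rightarrow> real^('m::finite)^('n::{finite,linorder})) \<Rightarrow> real^('l::finite)^('n::{finite,linorder})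
   \<Rightarrow> (real^((('n::{finite,linorder})+('m::finite)) \<times> (('n::{finite,linorder})+('m::finite)))) set" where
  "DomS M A B2 B1 = {w. psd (unvecM w)} \<inter> {w. \<forall>i\<in>{1..M}. psd (Psi (A i) (B2 i) B1 (unvecM w))} \<inter> Omega"

lemma r1_eq: "r1 M A B2 B1 C D w = (if w \<in> DomS M A B2 B1 then ereal (vecM (Rmat C D) \<bullet> w) else \<infinity>)"
  unfolding r1_def DomS_def
  by (subst sum_indic) (auto simp: vecM_in_Gamma Gamma_plus_eq[symmetric] indic_def)

lemma Hsig_eq: "Hsig M A B2 B1 C D \<gamma> \<sigma> w = (if w \<in> DomS M A B2 B1 then
    ereal (vecM (Rmat C D) \<bullet> w + \<gamma> * fsig_abs \<sigma> (KV w)) else \<infinity>)"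
  unfolding Hsig_def r1_eq by simp

lemma Hzero_eq: "Hzero M A B2 B1 C D \<gamma> w = (if w \<in> DomS M A B2 B1 then
    ereal (vecM (Rmat C D) \<bullet> w + \<gamma> * real (l0norm (KV w))) else \<infinity>)"
  unfolding Hzero_def r1_eq by simp

lemma if01_mult: "(if P then (1::real) else 0) * x = (if P then x else 0)" by simp

lemma KV_nth: "KV w $ (a, b) = w $ (Inr a, Inl b)"
  unfolding KV_def vecM_def V1_def V2_def
  by (simp add: matrix_matrix_mult_def transpose_def if01_mult mult.commute[of _ "if _ then _ else _"])


lemma continuous_on_mmult[continuous_intros]:
  fixes f :: "'x::topological_space \<Rightarrow> real^'b^'a" and g :: "'x \<Rightarrow> real^'c^'b"
  assumes "continuous_on S f" "continuous_on S g"
  shows "continuous_on S (\<lambda>x. f x ** g x)"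
  unfolding matrix_matrix_mult_def
  by (intro continuous_intros assms)

lemma continuous_on_mvmult[continuous_intros]:
  fixes f :: "'x::topological_space \<Rightarrow> real^'b^'a" and g :: "'x \<Rightarrow> real^'b"
  assumes "continuous_on S f" "continuous_on S g"
  shows "continuous_on S (\<lambda>x. f x *v g x)"
  unfolding matrix_vector_mult_def
  by (intro continuous_intros assms)

lemma continuous_on_transpose[continuous_intros]:
  fixes f :: "'x::topological_space \<Rightarrow> real^'b^'a"
  assumes "continuous_on S f"
  shows "continuous_on S (\<lambda>x. transpose (f x))"
  unfolding transpose_def
  by (intro continuous_intros assms)

lemma continuous_on_unvecM[continuous_intros]:
  fixes f :: "'x::topological_space \<Rightarrow> real^('a::finite \<times> 'b::finite)"
  assumes "continuous_on S f"
  shows "continuous_on S (\<lambda>x. unvecM (f x))"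
  unfolding unvecM_def
  by (intro continuous_intros assms)

lemma closed_psd: "closed {X::real^'k^'k. psd X}"
proof -
  have "{X::real^'k^'k. psd X} = {X. transpose X = X} \<inter> (\<Inter>x. {X. 0 \<le> x \<bullet> (X *v x)})"
    by (auto simp: psd_def)
  moreover have "closed {X::real^'k^'k. transpose X = X}"
    by (intro closed_Collect_eq continuous_intros)
  moreover have "closed {X::real^'k^'k. 0 \<le> x \<bullet> (X *v x)}" for x
    by (intro closed_Collect_le continuous_intros)
  ultimately show ?thesis by (metis (no_types, lifting) closed_INT closed_Int)
qed


lemma closed_psd_pre: "continuous_on UNIV f \<Longrightarrow> closed {x. psd (f x :: real^'k^'k)}"
  using closed_vimage[OF closed_psd, of f] by (simp add: vimage_def)

lemma cont_Psi: "continuous_on UNIV (\<lambda>w. Psi A B2 B1 (unvecM w))"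
  unfolding Psi_def
  by (intro continuous_on_minus continuous_on_add continuous_on_mmult continuous_on_const continuous_on_unvecM continuous_on_id)

lemma closed_DomS:
  fixes A :: "nat \<Rightarrow> real^('n::{finite,linorder})^('n::{finite,linorder})" and B2 :: "nat \<Rightarrow> real^('m::finite)^('n::{finite,linorder})"
    and B1 :: "real^('l::finite)^('n::{finite,linorder})"
  shows "closed (DomS M A B2 B1)"
proof -
  have c1: "closed {w::real^(('n::{finite,linorder}+'m::finite) \<times> ('n::{finite,linorder}+'m::finite)). psd (unvecM w)}"
    by (rule closed_psd_pre) (intro continuous_intros)
  have c2: "closed {w::real^(('n::{finite,linorder}+'m::finite) \<times> ('n::{finite,linorder}+'m::finite)). \<forall>i\<in>{1..M}. psd (Psi (A i) (B2 i) B1 (unvecM w))}"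
  proof -
    have "continuous_on UNIV (\<lambda>w. Psi (A i) (B2 i) B1 (unvecM w))" for i by (rule cont_Psi)
    then have "closed {w. psd (Psi (A i) (B2 i) B1 (unvecM w))}" for i
      by (rule closed_psd_pre)
    then show ?thesis unfolding Ball_def
      by (intro closed_Collect_all closed_Collect_imp closed_Collect_const) auto
  qed
  have c3: "closed (Omega :: (real^(('n::{finite,linorder}+'m::finite) \<times> ('n::{finite,linorder}+'m::finite))) set)"
    unfolding Omega_eq
  proof (intro closed_Collect_all)
    fix i j :: 'n
    show "closed {w::real^(('n::{finite,linorder}+'m::finite) \<times> ('n::{finite,linorder}+'m::finite)). i < j \<longrightarrow> w $ (Inl i, Inl j) = 0}"
    proof (cases "i < j")
      case True then show ?thesis by (simp, intro closed_Collect_eq continuous_intros)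
    qed simp
  qed
  show ?thesis unfolding DomS_def using c1 c2 c3 by (intro closed_Int)
qed


definition slsc :: "('a::topological_space \<Rightarrow> ereal) \<Rightarrow> bool" where
  "slsc f \<longleftrightarrow> (\<forall>y x. y \<longlonglongrightarrow> x \<longrightarrow> f x \<le> liminf (\<lambda>k. f (y k)))"

lemma slsc_if:
  fixes g :: "'a::metric_space \<Rightarrow> real"
  assumes S: "closed S" and g: "continuous_on UNIV g"
  shows "slsc (\<lambda>w. if w \<in> S then ereal (g w) else \<infinity>)"
  unfolding slsc_def
proof (intro allI impI)
  fix y and x :: 'a assume yx: "y \<longlonglongrightarrow> x"
  show "(if x \<in> S then ereal (g x) else \<infinity>) \<le> liminf (\<lambda>k. if y k \<in> S then ereal (g (y k)) else \<infinity>)"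
  proof (cases "x \<in> S")
    case True
    have gl: "(\<lambda>k. ereal (g (y k))) \<longlonglongrightarrow> ereal (g x)"
    proof -
      have "(\<lambda>k. g (y k)) \<longlonglongrightarrow> g x" using continuous_on_tendsto_compose[OF g yx] by simp
      then show ?thesis by (rule tendsto_ereal)
    qed
    have "ereal (g x) = liminf (\<lambda>k. ereal (g (y k)))"
      using lim_imp_Liminf[OF _ gl] by simp
    also have "\<dots> \<le> liminf (\<lambda>k. if y k \<in> S then ereal (g (y k)) else \<infinity>)"
      by (intro Liminf_mono always_eventually) auto
    finally show ?thesis using True by simp
  next
    case False
    have "open (- S)" using S by auto
    then have "eventually (\<lambda>k. y k \<in> - S) sequentially"
      using yx False unfolding tendsto_def by (metis ComplI)
    then have "eventually (\<lambda>k. (\<infinity>::ereal) \<le> (if y k \<in> S then ereal (g (y k)) else \<infinity>)) sequentially"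
      by eventually_elim auto
    then have "liminf (\<lambda>k. \<infinity>::ereal) \<le> liminf (\<lambda>k. if y k \<in> S then ereal (g (y k)) else \<infinity>)"
      by (rule Liminf_mono)
    then show ?thesis using False by (simp add: Liminf_const)
  qed
qed



lemma fsig_nonneg: "\<sigma> > 0 \<Longrightarrow> t \<ge> 0 \<Longrightarrow> 0 \<le> fsig \<sigma> t"
  unfolding fsig_def by (simp add: divide_nonneg_pos)

lemma fsig_mono: "0 < \<sigma>' \<Longrightarrow> \<sigma>' \<le> \<sigma> \<Longrightarrow> t \<ge> 0 \<Longrightarrow> fsig \<sigma> t \<le> fsig \<sigma>' t"
proof -
  assume a: "0 < \<sigma>'" "\<sigma>' \<le> \<sigma>" "t \<ge> 0"
  have "t / \<sigma> \<le> t / \<sigma>'" using a by (intro divide_left_mono) auto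
  then have "exp (- t / \<sigma>') \<le> exp (- t / \<sigma>)" by simp
  then show ?thesis unfolding fsig_def by simp
qed

lemma fsig_abs_nonneg: "\<sigma> > 0 \<Longrightarrow> 0 \<le> fsig_abs \<sigma> x"
  unfolding fsig_abs_def by (intro sum_nonneg fsig_nonneg) auto

lemma fsig_abs_mono: "0 < \<sigma>' \<Longrightarrow> \<sigma>' \<le> \<sigma> \<Longrightarrow> fsig_abs \<sigma> x \<le> fsig_abs \<sigma>' x"
  unfolding fsig_abs_def by (intro sum_mono fsig_mono) auto

lemma fsig_lim:
  assumes pos: "\<forall>i. \<sigma> i > 0" and lim: "\<sigma> \<longlonglongrightarrow> 0" and t: "t \<ge> 0"
  shows "(\<lambda>i. fsig (\<sigma> i) t) \<longlonglongrightarrow> (if t = 0 then 0 else 1)"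
proof (cases "t = 0")
  case True then show ?thesis by (simp add: fsig_def)
next
  case False
  then have tp: "t > 0" using t by auto
  have le: "exp (- t / \<sigma> i) \<le> \<sigma> i / t" for i
  proof -
    have a: "t / \<sigma> i \<le> exp (t / \<sigma> i)" using exp_ge_add_one_self[of "t / \<sigma> i"] by linarith
    have p: "0 < t / \<sigma> i" using pos tp by simp
    have "exp (- t / \<sigma> i) = inverse (exp (t / \<sigma> i))" by (simp add: exp_minus[symmetric])
    also have "\<dots> \<le> inverse (t / \<sigma> i)" by (rule le_imp_inverse_le[OF a p])
    also have "\<dots> = \<sigma> i / t" by simp
    finally show ?thesis .
  qed
  have "(\<lambda>i. \<sigma> i / t) \<longlonglongrightarrow> 0 / t" by (intro tendsto_divide lim tendsto_const) (use tp in auto)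
  then have h: "(\<lambda>i. \<sigma> i / t) \<longlonglongrightarrow> 0" by simp
  have e1: "eventually (\<lambda>i. (0::real) \<le> exp (- t / \<sigma> i)) sequentially" by simp
  have e2: "eventually (\<lambda>i. exp (- t / \<sigma> i) \<le> \<sigma> i / t) sequentially" using le by simp
  have "(\<lambda>i. exp (- t / \<sigma> i)) \<longlonglongrightarrow> 0"
    by (rule tendsto_sandwich[OF e1 e2 tendsto_const h])
  then have "(\<lambda>i. 1 - exp (- t / \<sigma> i)) \<longlonglongrightarrow> 1 - 0" by (intro tendsto_diff tendsto_const)
  then show ?thesis using False by (simp add: fsig_def)
qed

lemma fsig_abs_lim:
  assumes pos: "\<forall>i. \<sigma> i > 0" and lim: "\<sigma> \<longlonglongrightarrow> 0"
  shows "(\<lambda>i. fsig_abs (\<sigma> i) x) \<longlonglongrightarrow> real (l0norm x)"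
proof -
  have "(\<lambda>i. fsig_abs (\<sigma> i) x) \<longlonglongrightarrow> (\<Sum>k\<in>UNIV. if \<bar>x $ k\<bar> = 0 then 0 else 1)"
    unfolding fsig_abs_def by (intro tendsto_sum fsig_lim[OF pos lim]) auto
  moreover have "(\<Sum>k\<in>UNIV. if \<bar>x $ k\<bar> = 0 then 0 else 1) = real (l0norm x)"
    unfolding l0norm_def by (simp add: sum.If_cases Collect_neg_eq[symmetric])
  ultimately show ?thesis by simp
qed



lemma sym_inner: "transpose W = W \<Longrightarrow> x \<bullet> ((W::real^'k^'k) *v y) = y \<bullet> (W *v x)"
  by (metis dot_lmul_matrix inner_commute transpose_matrix_vector)

lemma psd_zero:
  fixes W :: "real^'k^'k"
  assumes p: "psd W" and z: "x \<bullet> (W *v x) = 0"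
  shows "W *v x = 0"
proof -
  define v where "v = W *v x"
  have sym: "transpose W = W" and nn: "\<And>u. 0 \<le> u \<bullet> (W *v u)" using p unfolding psd_def by auto
  define b where "b = v \<bullet> v"
  define c where "c = v \<bullet> (W *v v)"
  have c0: "0 \<le> c" unfolding c_def by (rule nn)
  have q: "0 \<le> 2 * t * b + t^2 * c" for t
  proof -
    have "(x + t *\<^sub>R v) \<bullet> (W *v (x + t *\<^sub>R v)) = x \<bullet> (W *v x) + t * (x \<bullet> (W *v v)) + t * (v \<bullet> (W *v x)) + t^2 * c"
      unfolding c_def by (simp add: matrix_vector_right_distrib matrix_vector_mult_scaleR power2_eq_square algebra_simps)
    also have "x \<bullet> (W *v v) = v \<bullet> (W *v x)" by (rule sym_inner[OF sym])
    finally show ?thesis using nn[of "x + t *\<^sub>R v"] z unfolding b_def v_def by (simp add: algebra_simps)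
  qed
  have b0: "b = 0"
  proof (rule ccontr)
    assume "b \<noteq> 0"
    then have bp: "b > 0" unfolding b_def by simp
    define t where "t = - b / (c + 1)"
    have d: "c + 1 \<noteq> 0" using c0 by linarith
    have tc: "t * c = - b - t"
    proof -
      have "t * (c + 1) = - b" unfolding t_def using d by simp
      then show ?thesis by (simp add: algebra_simps)
    qed
    have tn: "t < 0" unfolding t_def using bp c0 by (simp add: divide_neg_pos)
    have "0 \<le> 2 * t * b + t^2 * c" by (rule q)
    also have "2 * t * b + t^2 * c = 2 * t * b + t * (t * c)" by (simp add: power2_eq_square)
    also have "\<dots> = t * (b - t)" unfolding tc by (simp add: algebra_simps)
    also have "\<dots> < 0" using tn bp by (intro mult_neg_pos) auto
    finally show False by simp
  qed
  then show ?thesis unfolding b_def v_def by simp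
qed



lemma sum_UNIV_pair: "(\<Sum>p\<in>UNIV. f p) = (\<Sum>i\<in>UNIV. \<Sum>j\<in>UNIV. f (i, j))"
  by (simp add: sum.cartesian_product)

lemma gram_inner:
  fixes G :: "real^'a^'k"
  shows "vecM (transpose G ** G) \<bullet> w = (\<Sum>k\<in>UNIV. (G$k) \<bullet> (unvecM w *v (G$k)))"
proof -
  have "vecM (transpose G ** G) \<bullet> w = (\<Sum>i\<in>UNIV. \<Sum>j\<in>UNIV. (\<Sum>k\<in>UNIV. G$k$i * G$k$j) * w$(i,j))"
    unfolding inner_vec_def by (subst sum_UNIV_pair) (simp add: vecM_def matrix_matrix_mult_def transpose_def)
  also have "\<dots> = (\<Sum>i\<in>UNIV. \<Sum>j\<in>UNIV. \<Sum>k\<in>UNIV. G$k$i * (w$(i,j) * G$k$j))"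
    by (intro sum.cong refl) (simp add: sum_distrib_left mult_ac)
  also have "\<dots> = (\<Sum>i\<in>UNIV. \<Sum>k\<in>UNIV. \<Sum>j\<in>UNIV. G$k$i * (w$(i,j) * G$k$j))"
    by (rule sum.cong[OF refl], rule sum.swap)
  also have "\<dots> = (\<Sum>k\<in>UNIV. \<Sum>i\<in>UNIV. \<Sum>j\<in>UNIV. G$k$i * (w$(i,j) * G$k$j))"
    by (rule sum.swap)
  also have "\<dots> = (\<Sum>k\<in>UNIV. (G$k) \<bullet> (unvecM w *v (G$k)))"
    by (simp add: inner_vec_def matrix_vector_mult_def unvecM_def sum_distrib_left)
  finally show ?thesis .
qed




definition Gm :: "real^'n^'q \<Rightarrow> real^'m^'q \<Rightarrow> real^('n+'m)^('q+'q)" where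
  "Gm C D = (\<chi> k j. case (k, j) of (Inl q, Inl a) \<Rightarrow> C$q$a | (Inr q, Inr b) \<Rightarrow> D$q$b | _ \<Rightarrow> 0)"

lemma sum_UNIV_Plus:
  fixes f :: "'a::finite + 'b::finite \<Rightarrow> 'c::comm_monoid_add"
  shows "(\<Sum>k\<in>UNIV. f k) = (\<Sum>a\<in>UNIV. f (Inl a)) + (\<Sum>b\<in>UNIV. f (Inr b))"
  using sum.Plus[of "UNIV::'a::finite set" "UNIV::'b::finite set" f] by (simp add: o_def)

lemma Rmat_Gm: "Rmat C D = transpose (Gm C D) ** Gm C D"
  unfolding vec_eq_iff
proof (intro allI)
  fix i j :: "'a + 'b"
  show "Rmat C D $ i $ j = (transpose (Gm C D) ** Gm C D) $ i $ j"
    by (cases i; cases j) (simp_all add: Rmat_def Gm_def matrix_matrix_mult_def transpose_def sum_UNIV_Plus)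
qed

lemma Gm_mult_Inl: "(Gm C D *v z) $ Inl q = (C *v (\<chi> a. z $ Inl a)) $ q"
  by (simp add: Gm_def matrix_vector_mult_def sum_UNIV_Plus)
lemma Gm_mult_Inr: "(Gm C D *v z) $ Inr q = (D *v (\<chi> a. z $ Inr a)) $ q"
  by (simp add: Gm_def matrix_vector_mult_def sum_UNIV_Plus)

lemma pd_kernel:
  assumes "pd (transpose C ** C)" and "C *v x = 0"
  shows "x = 0"
proof (rule ccontr)
  assume "x \<noteq> 0"
  then have "0 < x \<bullet> ((transpose C ** C) *v x)" using assms(1) unfolding pd_def by blast
  also have "(transpose C ** C) *v x = transpose C *v (C *v x)" by (simp add: matrix_vector_mul_assoc)
  finally show False using assms(2) by simp
qed

lemma Gm_kernel:
  assumes "pd (transpose C ** C)" "pd (transpose D ** D)" and z: "Gm C D *v z = 0"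
  shows "z = 0"
proof -
  have "C *v (\<chi> a. z $ Inl a) = 0" using z Gm_mult_Inl[of C D z] by (simp add: vec_eq_iff)
  then have l: "(\<chi> a. z $ Inl a) = 0" by (rule pd_kernel[OF assms(1)])
  have "D *v (\<chi> a. z $ Inr a) = 0" using z Gm_mult_Inr[of C D z] by (simp add: vec_eq_iff)
  then have r: "(\<chi> a. z $ Inr a) = 0" by (rule pd_kernel[OF assms(2)])
  show ?thesis unfolding vec_eq_iff
  proof
    fix i show "z $ i = 0 $ i"
      using l r by (cases i) (auto simp: vec_eq_iff)
  qed
qed

lemma fR_nonneg_pos:
  assumes CC: "pd (transpose C ** C)" and DD: "pd (transpose D ** D)" and w: "psd (unvecM w)"
  shows "0 \<le> vecM (Rmat C D) \<bullet> w" and "w \<noteq> 0 \<Longrightarrow> 0 < vecM (Rmat C D) \<bullet> w"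
proof -
  let ?G = "Gm C D" and ?W = "unvecM w"
  have eq: "vecM (Rmat C D) \<bullet> w = (\<Sum>k\<in>UNIV. (?G$k) \<bullet> (?W *v (?G$k)))"
    unfolding Rmat_Gm by (rule gram_inner)
  have nn: "\<And>k. 0 \<le> (?G$k) \<bullet> (?W *v (?G$k))" using w unfolding psd_def by blast
  show "0 \<le> vecM (Rmat C D) \<bullet> w" unfolding eq by (intro sum_nonneg nn)
  assume "w \<noteq> 0"
  show "0 < vecM (Rmat C D) \<bullet> w"
  proof (rule ccontr)
    assume "\<not> 0 < vecM (Rmat C D) \<bullet> w"
    then have "(\<Sum>k\<in>UNIV. (?G$k) \<bullet> (?W *v (?G$k))) = 0"
      using eq \<open>0 \<le> vecM (Rmat C D) \<bullet> w\<close> by linarith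
    then have "\<forall>k\<in>UNIV. (?G$k) \<bullet> (?W *v (?G$k)) = 0"
      by (subst (asm) sum_nonneg_eq_0_iff) (simp_all add: nn)
    then have z: "?W *v (?G$k) = 0" for k using psd_zero[OF w] by blast
    have "?W $ i = 0" for i
    proof (rule Gm_kernel[OF CC DD])
      show "?G *v (?W $ i) = 0" unfolding vec_eq_iff
      proof
        fix k
        have "(?W *v (?G$k)) $ i = 0" using z by simp
        then show "(?G *v (?W $ i)) $ k = 0 $ k"
          by (simp add: matrix_vector_mult_def mult.commute)
      qed
    qed
    then have "?W = 0" by (simp add: vec_eq_iff)
    then have "w = 0" by (metis vec_unvec unvecM_nth vec_eq_iff zero_index)
    with \<open>w \<noteq> 0\<close> show False by simp
  qed
qed

lemma psd_scale: "psd X \<Longrightarrow> 0 \<le> a \<Longrightarrow> psd (a *\<^sub>R X)"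
  unfolding psd_def by (auto simp: transpose_scalar scaleR_matrix_vector_assoc[symmetric])

lemma unvecM_scale: "unvecM (a *\<^sub>R w) = a *\<^sub>R unvecM w"
  by (simp add: vec_eq_iff)

lemma closed_Gamma: "closed {w::real^('k::finite \<times> 'k). psd (unvecM w)}"
  by (rule closed_psd_pre) (intro continuous_intros)

lemma coercive:
  fixes C :: "real^('n::finite)^('q::finite)" and D :: "real^('m::finite)^('q::finite)"
  assumes CC: "pd (transpose C ** C)" and DD: "pd (transpose D ** D)"
  shows "\<exists>c>0. \<forall>w. psd (unvecM w) \<longrightarrow> c * norm w \<le> vecM (Rmat C D) \<bullet> w"
proof -
  define K :: "(real^(('n+'m)\<times>('n+'m))) set" where "K = {w. psd (unvecM w)} \<inter> sphere 0 1"
  let ?f = "\<lambda>w. vecM (Rmat C D) \<bullet> w"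
  have cK: "compact K" unfolding K_def by (intro closed_Int_compact closed_Gamma compact_sphere)
  obtain c where c: "c > 0" "\<forall>u\<in>K. c \<le> ?f u"
  proof (cases "K = {}")
    case True then show ?thesis using that[of 1] by auto
  next
    case False
    have "continuous_on K ?f" by (intro continuous_intros)
    then obtain x0 where x0: "x0 \<in> K" "\<forall>y\<in>K. ?f x0 \<le> ?f y"
      using continuous_attains_inf[OF cK False] by blast
    have "x0 \<noteq> 0" "psd (unvecM x0)" using x0(1) unfolding K_def by auto
    then have "0 < ?f x0" using fR_nonneg_pos(2)[OF CC DD] by blast
    then show ?thesis using that x0 by blast
  qed
  show ?thesis
  proof (intro exI[of _ c] conjI allI impI)
    show "c > 0" by (rule c(1))
    fix w :: "real^(('n+'m)\<times>('n+'m))" assume w: "psd (unvecM w)"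
    show "c * norm w \<le> ?f w"
    proof (cases "w = 0")
      case True then show ?thesis by simp
    next
      case False
      define u where "u = (1 / norm w) *\<^sub>R w"
      have "psd (unvecM u)" unfolding u_def unvecM_scale by (rule psd_scale[OF w]) simp
      moreover have "norm u = 1" unfolding u_def using False by simp
      ultimately have "u \<in> K" unfolding K_def by simp
      then have "c \<le> ?f u" using c(2) by blast
      also have "?f u = ?f w / norm w" unfolding u_def by (simp add: inner_scaleR_right)
      finally show ?thesis using False by (simp add: field_simps)
    qed
  qed
qed



lemma keyL:
  fixes F :: "nat \<Rightarrow> 'a::topological_space \<Rightarrow> ereal"
  assumes lsc: "\<And>j. slsc (F j)"
    and lim: "\<And>x. (\<lambda>j. F j x) \<longlonglongrightarrow> H x"
    and y: "y \<longlonglongrightarrow> x" and b: "b \<longlonglongrightarrow> L"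
    and ev: "\<And>j. eventually (\<lambda>k. F j (y k) \<le> ereal (b k)) sequentially"
  shows "H x \<le> ereal L"
proof -
  have "F j x \<le> ereal L" for j
  proof -
    have "F j x \<le> liminf (\<lambda>k. F j (y k))" using lsc[of j] y unfolding slsc_def by blast
    also have "\<dots> \<le> liminf (\<lambda>k. ereal (b k))" by (rule Liminf_mono[OF ev])
    also have "\<dots> = ereal L" by (rule lim_imp_Liminf) (auto intro: b)
    finally show ?thesis .
  qed
  then show ?thesis by (intro LIMSEQ_le_const2[OF lim]) auto
qed

lemma abstract_main:
  fixes F :: "nat \<Rightarrow> 'a::euclidean_space \<Rightarrow> ereal"
  assumes lsc: "\<And>j. slsc (F j)"
    and lim: "\<And>x. (\<lambda>j. F j x) \<longlonglongrightarrow> H x"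
    and inc: "\<And>x. incseq (\<lambda>j. F j x)"
    and coer: "c > 0" "\<And>j x. ereal (c * norm x) \<le> F j x"
    and prp: "\<exists>x. H x < \<infinity>"
  shows
    "((\<lambda>i. INF w. F i w) \<longlonglongrightarrow> (INF w. H w))
   \<and>
    (\<exists>N::nat set. finite (UNIV - N)
       \<and> (\<forall>v\<in>N. argminE (F v) \<noteq> {})
       \<and> bounded (\<Union>v\<in>N. argminE (F v))
       \<and> outer_limit N (\<lambda>v. argminE (F v)) \<subseteq> argminE H)
   \<and>
    (\<forall>(\<epsilon>::nat \<Rightarrow> real) W. (\<forall>i. \<epsilon> i > 0) \<and> decseq \<epsilon> \<and> \<epsilon> \<longlonglongrightarrow> 0 \<and>
       (\<forall>i. W i \<in> eps_argminE (\<epsilon> i) (F i)) \<longrightarrow>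
       bounded (range W) \<and>
       (\<forall>x r. strict_mono r \<and> (W \<circ> r) \<longlonglongrightarrow> x \<longrightarrow> x \<in> argminE H))"
proof -
  define m where "m i = (INF w. F i w)" for i
  define mH where "mH = (INF w. H w)"
  have FleH: "F i x \<le> H x" for i x using incseq_le[OF inc lim] .
  have Fnn: "0 \<le> F i x" for i x
    by (rule order_trans[OF _ coer(2)]) (use coer(1) in auto)
  have mle: "m i \<le> mH" for i unfolding m_def mH_def by (intro INF_mono) (use FleH in blast)
  obtain x0 where x0: "H x0 < \<infinity>" using prp by blast
  have "mH \<le> H x0" unfolding mH_def by (rule INF_lower) auto
  with x0 have mHfin: "mH < \<infinity>" by auto
  have mnn: "0 \<le> m i" for i unfolding m_def by (intro INF_greatest) (use Fnn in auto)
  have mHnn: "0 \<le> mH" using mnn[of 0] mle[of 0] by auto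
  define B where "B = real_of_ereal mH"
  have mHB: "mH = ereal B" unfolding B_def using mHfin mHnn by (cases mH) auto
  define mr where "mr i = real_of_ereal (m i)" for i
  have mr: "m i = ereal (mr i)" for i unfolding mr_def using mle[of i] mnn[of i] mHB by (cases "m i") auto
  have mrB: "mr i \<le> B" for i using mle[of i] mr[of i] mHB by auto
  have minc: "incseq mr" 
  proof (rule incseq_SucI)
    fix i show "mr i \<le> mr (Suc i)"
    proof -
      have "m i \<le> m (Suc i)" unfolding m_def
        by (intro INF_mono) (use inc in \<open>auto simp: incseq_Suc_iff\<close>)
      then show ?thesis using mr[of i] mr[of "Suc i"] by simp
    qed
  qed
  have bnd: "norm x \<le> K / c" if "F i x \<le> ereal K" for i x K
  proof -
    have "ereal (c * norm x) \<le> ereal K" using coer(2)[where j=i and x=x] that by (rule order_trans)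
    then have "c * norm x \<le> K" by simp
    then show ?thesis using coer(1) by (simp add: pos_le_divide_eq mult.commute)
  qed
  have ex: "\<exists>x. F i x = m i" for i
  proof -
    have "\<exists>y. F i y < ereal (mr i + 1 / (Suc k))" for k :: nat
    proof -
      have "m i < ereal (mr i + 1 / (Suc k))" using mr[of i] by auto
      then show ?thesis unfolding m_def by (simp add: INF_less_iff)
    qed
    then obtain y where y: "\<And>k. F i (y k) < ereal (mr i + 1 / (Suc k))" by metis
    have "norm (y k) \<le> (mr i + 1) / c" for k
    proof -
      have "mr i + 1 / (Suc k) \<le> mr i + 1" by (simp add: divide_le_eq)
      then show ?thesis using bnd[where i=i and x="y k" and K="mr i + 1"] y[of k] by (meson ereal_less_eq(3) less_imp_le order_trans)
    qed
    then have "bounded (range y)" unfolding bounded_iff by auto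
    then obtain x r where r: "strict_mono r" "(y \<circ> r) \<longlonglongrightarrow> x"
      using bounded_imp_convergent_subsequence by blast
    have bl: "(\<lambda>k. mr i + 1 / (Suc (r k))) \<longlonglongrightarrow> mr i"
    proof -
      have "(\<lambda>k. mr i + 1 / (Suc k)) \<longlonglongrightarrow> mr i + 0"
        by (intro tendsto_add tendsto_const) (rule LIMSEQ_Suc[OF lim_inverse_n'[unfolded inverse_eq_divide]])
      from LIMSEQ_subseq_LIMSEQ[OF this r(1)] show ?thesis by (simp add: o_def)
    qed
    have "F i x \<le> ereal (mr i)"
      by (rule keyL[where F="\<lambda>_. F i" and H="F i", OF lsc tendsto_const r(2) bl])
         (use y less_imp_le in \<open>auto intro!: always_eventually\<close>)
    moreover have "m i \<le> F i x" unfolding m_def by (rule INF_lower) auto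
    ultimately show ?thesis using mr[of i] by auto
  qed
  then obtain xm where xm: "\<And>i. F i (xm i) = m i" by metis
  have clus: "H x \<le> ereal L" if r: "strict_mono r" and yx: "y \<longlonglongrightarrow> x" and bL: "b \<longlonglongrightarrow> L"
     and yb: "\<And>k. F (r k) (y k) \<le> ereal (b k)" for r y x b L
  proof (rule keyL[OF lsc lim yx bL])
    fix j
    show "eventually (\<lambda>k. F j (y k) \<le> ereal (b k)) sequentially"
    proof (rule eventually_sequentiallyI[of j])
      fix k assume "j \<le> k"
      then have "j \<le> r k" using seq_suble[OF r, of k] by linarith
      then have "F j (y k) \<le> F (r k) (y k)" using inc unfolding incseq_def by blast
      then show "F j (y k) \<le> ereal (b k)" using yb[of k] by auto
    qed
  qed
  have mrlim: "mr \<longlonglongrightarrow> B"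
  proof -
    have "bounded (range xm)" unfolding bounded_iff
      using bnd[where K=B] xm mr mrB by (metis ereal_less_eq(3) rangeE)
    then obtain x r where r: "strict_mono r" "(xm \<circ> r) \<longlonglongrightarrow> x"
      using bounded_imp_convergent_subsequence by blast
    have "mr \<longlonglongrightarrow> (SUP i. mr i)"
      by (rule LIMSEQ_incseq_SUP[OF _ minc]) (use mrB in \<open>auto intro!: bdd_aboveI2\<close>)
    then have s: "(mr \<circ> r) \<longlonglongrightarrow> (SUP i. mr i)" by (rule LIMSEQ_subseq_LIMSEQ[OF _ r(1)])
    have "H x \<le> ereal (SUP i. mr i)"
      by (rule clus[OF r(1) r(2) s]) (simp add: xm mr)
    moreover have "mH \<le> H x" unfolding mH_def by (rule INF_lower) auto
    ultimately have "ereal B \<le> ereal (SUP i. mr i)" using mHB by (metis order_trans)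
    then have "B \<le> (SUP i. mr i)" by simp
    moreover have "(SUP i. mr i) \<le> B" by (rule cSUP_least) (use mrB in auto)
    ultimately have "(SUP i. mr i) = B" by linarith
    then show ?thesis using \<open>mr \<longlonglongrightarrow> (SUP i. mr i)\<close> by simp
  qed
  have P1: "(\<lambda>i. INF w. F i w) \<longlonglongrightarrow> (INF w. H w)"
    using mrlim[THEN tendsto_ereal] unfolding mr[symmetric] m_def[symmetric] mH_def[symmetric] mHB .
  have P2: "\<exists>N::nat set. finite (UNIV - N)
       \<and> (\<forall>v\<in>N. argminE (F v) \<noteq> {})
       \<and> bounded (\<Union>v\<in>N. argminE (F v))
       \<and> outer_limit N (\<lambda>v. argminE (F v)) \<subseteq> argminE H"
  proof (intro exI[of _ UNIV] conjI)
    show "finite (UNIV - UNIV :: nat set)" by simp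
    show "\<forall>v\<in>UNIV. argminE (F v) \<noteq> {}" unfolding argminE_def using xm m_def by (metis (mono_tags, lifting) empty_iff mem_Collect_eq)
    show "bounded (\<Union>v\<in>UNIV. argminE (F v))" unfolding bounded_iff
    proof (intro exI ballI)
      fix x assume "x \<in> (\<Union>v\<in>UNIV. argminE (F v))"
      then obtain v where "F v x = m v" unfolding argminE_def m_def by auto
      then show "norm x \<le> B / c" using bnd[where i=v and x=x and K=B] mr[of v] mrB[of v] by auto
    qed
    show "outer_limit UNIV (\<lambda>v. argminE (F v)) \<subseteq> argminE H"
    proof
      fix x assume "x \<in> outer_limit UNIV (\<lambda>v. argminE (F v))"
      then obtain r s where r: "strict_mono r" "\<And>k. s k \<in> argminE (F (r k))" "s \<longlonglongrightarrow> x"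
        unfolding outer_limit_def by blast
      have "(mr \<circ> r) \<longlonglongrightarrow> B" by (rule LIMSEQ_subseq_LIMSEQ[OF mrlim r(1)])
      then have "H x \<le> ereal B"
        by (rule clus[OF r(1) r(3)]) (use r(2) mr in \<open>auto simp: argminE_def m_def\<close>)
      moreover have "mH \<le> H x" unfolding mH_def by (rule INF_lower) auto
      ultimately show "x \<in> argminE H" unfolding argminE_def mH_def[symmetric] using mHB by auto
    qed
  qed
  have P3: "\<forall>(\<epsilon>::nat \<Rightarrow> real) W. (\<forall>i. \<epsilon> i > 0) \<and> decseq \<epsilon> \<and> \<epsilon> \<longlonglongrightarrow> 0 \<and>
       (\<forall>i. W i \<in> eps_argminE (\<epsilon> i) (F i)) \<longrightarrow>
       bounded (range W) \<and>
       (\<forall>x r. strict_mono r \<and> (W \<circ> r) \<longlonglongrightarrow> x \<longrightarrow> x \<in> argminE H)"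
  proof (intro allI impI, rule conjI)
    fix \<epsilon> :: "nat \<Rightarrow> real" and W
    assume a: "(\<forall>i. \<epsilon> i > 0) \<and> decseq \<epsilon> \<and> \<epsilon> \<longlonglongrightarrow> 0 \<and> (\<forall>i. W i \<in> eps_argminE (\<epsilon> i) (F i))"
    have Wi: "F i (W i) \<le> ereal (mr i + \<epsilon> i)" for i
      using a mr[of i] unfolding eps_argminE_def m_def by (metis mem_Collect_eq plus_ereal.simps(1))
    show "bounded (range W)" unfolding bounded_iff
    proof (intro exI ballI)
      fix x assume "x \<in> range W"
      then obtain i where i: "x = W i" by auto
      have "\<epsilon> i \<le> \<epsilon> 0" using a unfolding decseq_def by auto
      then have "F i x \<le> ereal (B + \<epsilon> 0)" using Wi[of i] mrB[of i] i
        by (meson add_mono ereal_less_eq(3) order_trans)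
      then show "norm x \<le> (B + \<epsilon> 0) / c" by (rule bnd)
    qed
    show "\<forall>x r. strict_mono r \<and> (W \<circ> r) \<longlonglongrightarrow> x \<longrightarrow> x \<in> argminE H"
    proof (intro allI impI)
      fix x r assume xr: "strict_mono r \<and> (W \<circ> r) \<longlonglongrightarrow> x"
      have "(\<lambda>k. mr (r k) + \<epsilon> (r k)) \<longlonglongrightarrow> B + 0"
        using LIMSEQ_subseq_LIMSEQ[OF mrlim, of r] LIMSEQ_subseq_LIMSEQ[of \<epsilon> 0 r] xr a
        by (intro tendsto_add) (auto simp: o_def)
      then have "H x \<le> ereal (B + 0)"
        by (rule clus[OF conjunct1[OF xr] conjunct2[OF xr, unfolded comp_def]]) (use Wi in auto)
      moreover have "mH \<le> H x" unfolding mH_def by (rule INF_lower) auto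
      ultimately show "x \<in> argminE H" unfolding argminE_def mH_def[symmetric] using mHB by auto
    qed
  qed
  show ?thesis using P1 P2 P3 by blast
qed


lemma KV_eq: "KV w = (\<chi> k. w $ (Inr (fst k), Inl (snd k)))"
  unfolding vec_eq_iff by (auto simp: KV_nth)

lemma cont_g: "s \<noteq> 0 \<Longrightarrow> continuous_on UNIV (\<lambda>w. vecM R \<bullet> w + \<gamma> * fsig_abs s (KV w))"
  unfolding KV_eq fsig_abs_def fsig_def by (intro continuous_intros) auto


theorem theorem25:
  fixes M :: nat
    and A :: "nat \<Rightarrow> real^('n::{finite,linorder})^('n::{finite,linorder})"
    and B2 :: "nat \<Rightarrow> real^('m::finite)^('n::{finite,linorder})"
    and B1 :: "real^('l::finite)^('n::{finite,linorder})"
    and C :: "real^('n::{finite,linorder})^('q::finite)"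
    and D :: "real^('m::finite)^('q::finite)"
    and \<gamma> :: real
    and \<sigma> :: "nat \<Rightarrow> real"
  assumes M: "M \<ge> 1"
    and CD: "transpose C ** D = 0"
    and DD: "pd (transpose D ** D)"
    and BB: "pd (B1 ** transpose B1)"
    and CC: "pd (transpose C ** C)"
    and proper: "\<exists>w. r1 M A B2 B1 C D w < \<infinity>"
    and gamma: "\<gamma> > 0"
    and sig_pos: "\<forall>i. \<sigma> i > 0"
    and sig_dec: "decseq \<sigma>"
    and sig_lim: "\<sigma> \<longlonglongrightarrow> 0"
  shows
    "((\<lambda>i. INF w. Hsig M A B2 B1 C D \<gamma> (\<sigma> i) w)
        \<longlonglongrightarrow> (INF w. Hzero M A B2 B1 C D \<gamma> w))
   \<and>
    (\<exists>N::nat set. finite (UNIV - N)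
       \<and> (\<forall>v\<in>N. argminE (Hsig M A B2 B1 C D \<gamma> (\<sigma> v)) \<noteq> {})
       \<and> bounded (\<Union>v\<in>N. argminE (Hsig M A B2 B1 C D \<gamma> (\<sigma> v)))
       \<and> outer_limit N (\<lambda>v. argminE (Hsig M A B2 B1 C D \<gamma> (\<sigma> v)))
           \<subseteq> argminE (Hzero M A B2 B1 C D \<gamma>))
   \<and>
    (\<forall>(\<epsilon>::nat \<Rightarrow> real) W. (\<forall>i. \<epsilon> i > 0) \<and> decseq \<epsilon> \<and> \<epsilon> \<longlonglongrightarrow> 0 \<and>
       (\<forall>i. W i \<in> eps_argminE (\<epsilon> i) (Hsig M A B2 B1 C D \<gamma> (\<sigma> i))) \<longrightarrow>
       bounded (range W) \<and>
       (\<forall>x r. strict_mono r \<and> (W \<circ> r) \<longlonglongrightarrow> x \<longrightarrow> x \<in> argminE (Hzero M A B2 B1 C D \<gamma>)))"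
proof -
  define F where "F i = Hsig M A B2 B1 C D \<gamma> (\<sigma> i)" for i
  define H where "H = Hzero M A B2 B1 C D \<gamma>"
  obtain c where c: "c > 0" "\<forall>w. psd (unvecM w) \<longrightarrow> c * norm w \<le> vecM (Rmat C D) \<bullet> w"
    using coercive[OF CC DD] by blast
  have lsc: "slsc (F j)" for j
  proof -
    have "F j = (\<lambda>w. if w \<in> DomS M A B2 B1 then ereal (vecM (Rmat C D) \<bullet> w + \<gamma> * fsig_abs (\<sigma> j) (KV w)) else \<infinity>)"
      unfolding F_def by (rule ext) (rule Hsig_eq)
    moreover have "\<sigma> j \<noteq> 0" using sig_pos by (metis less_irrefl)
    ultimately show ?thesis by (simp only:) (intro slsc_if closed_DomS cont_g)
  qed
  have lim: "(\<lambda>j. F j x) \<longlonglongrightarrow> H x" for x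
  proof (cases "x \<in> DomS M A B2 B1")
    case True
    have "(\<lambda>j. vecM (Rmat C D) \<bullet> x + \<gamma> * fsig_abs (\<sigma> j) (KV x)) \<longlonglongrightarrow> vecM (Rmat C D) \<bullet> x + \<gamma> * real (l0norm (KV x))"
      by (intro tendsto_add tendsto_mult tendsto_const fsig_abs_lim sig_pos sig_lim)
    then have "(\<lambda>j. ereal (vecM (Rmat C D) \<bullet> x + \<gamma> * fsig_abs (\<sigma> j) (KV x))) \<longlonglongrightarrow> ereal (vecM (Rmat C D) \<bullet> x + \<gamma> * real (l0norm (KV x)))"
      by (rule tendsto_ereal)
    then show ?thesis using True unfolding F_def H_def Hsig_eq Hzero_eq by simp
  next
    case False
    then show ?thesis unfolding F_def H_def Hsig_eq Hzero_eq by simp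
  qed
  have inc: "incseq (\<lambda>j. F j x)" for x
  proof (rule incseq_SucI)
    fix j
    have "fsig_abs (\<sigma> j) (KV x) \<le> fsig_abs (\<sigma> (Suc j)) (KV x)"
      using sig_pos sig_dec by (intro fsig_abs_mono) (auto simp: decseq_Suc_iff)
    then have "\<gamma> * fsig_abs (\<sigma> j) (KV x) \<le> \<gamma> * fsig_abs (\<sigma> (Suc j)) (KV x)"
      using gamma by (intro mult_left_mono) auto
    then show "F j x \<le> F (Suc j) x" unfolding F_def Hsig_eq by auto
  qed
  have coer: "ereal (c * norm x) \<le> F j x" for j x
  proof (cases "x \<in> DomS M A B2 B1")
    case True
    then have "psd (unvecM x)" unfolding DomS_def by auto
    then have "c * norm x \<le> vecM (Rmat C D) \<bullet> x" using c(2) by blast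
    moreover have "0 \<le> \<gamma> * fsig_abs (\<sigma> j) (KV x)"
      using gamma sig_pos by (intro mult_nonneg_nonneg fsig_abs_nonneg) auto
    ultimately show ?thesis using True unfolding F_def Hsig_eq by simp
  next
    case False
    then show ?thesis unfolding F_def Hsig_eq by simp
  qed
  have prp: "\<exists>x. H x < \<infinity>"
  proof -
    obtain w where "r1 M A B2 B1 C D w < \<infinity>" using proper by blast
    then have "w \<in> DomS M A B2 B1" unfolding r1_eq by (auto split: if_splits)
    then show ?thesis unfolding H_def Hzero_eq by auto
  qed
  show ?thesis
    using abstract_main[of F H c, OF lsc lim inc c(1) coer prp] unfolding F_def H_def .
qed

end
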